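(* Let $K\subseteq[0,1]^n$ and let $f_1,\dots,f_k:K\to[0,1]$ be polynomially bounded on $K$. Then their sum $f:=f_1+\dots+f_k$ is polynomially bounded on $K$.
   Context: For a partition $[n]=A\sqcup S\sqcup B$, the open face is $F_{A,S,B}=\{p\in[0,1]^n: p_i=0\ (i\in A),\ 0<p_i<1\ (i\in S),\ p_i=1\ (i\in B)\}$. For $T\subseteq[n]$, $p^T=\prod_{i\in T}p_i$, $(1-p)^T=\prod_{i\in T}(1-p_i)$. A nonnegative function $h$ on $K$ is polynomially bounded on $K$ if there exist an integer $m\ge0$ and a real $c>0$ such that for every open face $F_{A,S,B}$: if some $q\in K\cap F_{A,S,B}$ has $h(q)>0$, then $h(p)\ge c\left((1-p)^A p^S(1-p)^S p^B\right)^m$ for all $p\in K$. *)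

theory Defs
  imports "HOL-Analysis.Analysis"
begin

text \<open>Points of [0,1]^n are represented as functions nat => real; only the
coordinates i < n (i.e. the index set {..<n}, standing for [n]) matter.\<close>

definition unit_cube :: "nat \<Rightarrow> (nat \<Rightarrow> real) set" where
  "unit_cube n = {p. \<forall>i<n. 0 \<le> p i \<and> p i \<le> 1}"

definition open_face :: "nat \<Rightarrow> nat set \<Rightarrow> nat set \<Rightarrow> nat set \<Rightarrow> (nat \<Rightarrow> real) set" where
  "open_face n A S B = {p \<in> unit_cube n.
      (\<forall>i\<in>A. p i = 0) \<and> (\<forall>i\<in>S. 0 < p i \<and> p i < 1) \<and> (\<forall>i\<in>B. p i = 1)}"

definition is_partition3 :: "nat \<Rightarrow> nat set \<Rightarrow> nat set \<Rightarrow> nat set \<Rightarrow> bool" where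
  "is_partition3 n A S B \<longleftrightarrow> A \<union> S \<union> B = {..<n} \<and>
      A \<inter> S = {} \<and> A \<inter> B = {} \<and> S \<inter> B = {}"

definition face_monomial :: "nat set \<Rightarrow> nat set \<Rightarrow> nat set \<Rightarrow> (nat \<Rightarrow> real) \<Rightarrow> real" where
  "face_monomial A S B p =
     (\<Prod>i\<in>A. 1 - p i) * (\<Prod>i\<in>S. p i) * (\<Prod>i\<in>S. 1 - p i) * (\<Prod>i\<in>B. p i)"

definition poly_bounded_on :: "nat \<Rightarrow> (nat \<Rightarrow> real) set \<Rightarrow> ((nat \<Rightarrow> real) \<Rightarrow> real) \<Rightarrow> bool" where
  "poly_bounded_on n K h \<longleftrightarrow>
     (\<forall>p\<in>K. 0 \<le> h p) \<and>
     (\<exists>(m::nat) (c::real). c > 0 \<and>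
        (\<forall>A S B. is_partition3 n A S B \<longrightarrow>
           (\<exists>q\<in>K \<inter> open_face n A S B. h q > 0) \<longrightarrow>
           (\<forall>p\<in>K. h p \<ge> c * (face_monomial A S B p) ^ m)))"

end

theory Submission
  imports Defs
begin

lemma fm_bounds:
  assumes "p \<in> unit_cube n" "is_partition3 n A S B"
  shows "0 \<le> face_monomial A S B p \<and> face_monomial A S B p \<le> 1"
proof -
  have u: "\<And>i. i < n \<Longrightarrow> 0 \<le> p i \<and> p i \<le> 1" using assms(1) unfolding unit_cube_def by auto
  have sub: "A \<subseteq> {..<n}" "S \<subseteq> {..<n}" "B \<subseteq> {..<n}" using assms(2) unfolding is_partition3_def by auto
  have a: "0 \<le> (\<Prod>i\<in>A. 1 - p i) \<and> (\<Prod>i\<in>A. 1 - p i) \<le> 1"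
    using u sub by (auto intro!: prod_nonneg prod_le_1)
  have b: "0 \<le> (\<Prod>i\<in>S. p i) \<and> (\<Prod>i\<in>S. p i) \<le> 1"
    using u sub by (auto intro!: prod_nonneg prod_le_1)
  have c: "0 \<le> (\<Prod>i\<in>S. 1 - p i) \<and> (\<Prod>i\<in>S. 1 - p i) \<le> 1"
    using u sub by (auto intro!: prod_nonneg prod_le_1)
  have d: "0 \<le> (\<Prod>i\<in>B. p i) \<and> (\<Prod>i\<in>B. p i) \<le> 1"
    using u sub by (auto intro!: prod_nonneg prod_le_1)
  show ?thesis unfolding face_monomial_def using a b c d
    by (simp add: mult_le_one)
qed

theorem lemma11:
  fixes n k :: nat and K :: "(nat \<Rightarrow> real) set"
    and f :: "nat \<Rightarrow> (nat \<Rightarrow> real) \<Rightarrow> real"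
  assumes "K \<subseteq> unit_cube n"
    and "\<And>j p. j < k \<Longrightarrow> p \<in> K \<Longrightarrow> 0 \<le> f j p \<and> f j p \<le> 1"
    and "\<And>j. j < k \<Longrightarrow> poly_bounded_on n K (f j)"
  shows "poly_bounded_on n K (\<lambda>p. \<Sum>j<k. f j p)"
proof -
  have "\<forall>j. \<exists>mc. j < k \<longrightarrow> snd mc > (0::real) \<and>
        (\<forall>A S B. is_partition3 n A S B \<longrightarrow>
           (\<exists>q\<in>K \<inter> open_face n A S B. f j q > 0) \<longrightarrow>
           (\<forall>p\<in>K. f j p \<ge> snd mc * (face_monomial A S B p) ^ (fst mc :: nat)))"
  proof
    fix j
    show "\<exists>mc. j < k \<longrightarrow> snd mc > (0::real) \<and>
        (\<forall>A S B. is_partition3 n A S B \<longrightarrow>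
           (\<exists>q\<in>K \<inter> open_face n A S B. f j q > 0) \<longrightarrow>
           (\<forall>p\<in>K. f j p \<ge> snd mc * (face_monomial A S B p) ^ (fst mc :: nat)))"
    proof (cases "j < k")
      case True
      then obtain m c where "c > (0::real)" "\<forall>A S B. is_partition3 n A S B \<longrightarrow>
           (\<exists>q\<in>K \<inter> open_face n A S B. f j q > 0) \<longrightarrow>
           (\<forall>p\<in>K. f j p \<ge> c * (face_monomial A S B p) ^ (m :: nat))"
        using assms(3)[OF True] unfolding poly_bounded_on_def by blast
      then show ?thesis by (intro exI[of _ "(m, c)"]) simp
    qed simp
  qed
  then obtain mc where mc: "\<And>j. j < k \<Longrightarrow> snd (mc j) > (0::real) \<and>
        (\<forall>A S B. is_partition3 n A S B \<longrightarrow>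
           (\<exists>q\<in>K \<inter> open_face n A S B. f j q > 0) \<longrightarrow>
           (\<forall>p\<in>K. f j p \<ge> snd (mc j) * (face_monomial A S B p) ^ (fst (mc j) :: nat)))"
    by (rule choice[THEN exE]) blast
  define M where "M = (\<Sum>j<k. fst (mc j))"
  define C where "C = Min (insert 1 ((\<lambda>j. snd (mc j)) ` {..<k}))"
  have Cpos: "C > 0" unfolding C_def using mc by (subst Min_gr_iff) auto
  have Cle: "\<And>j. j < k \<Longrightarrow> C \<le> snd (mc j)" unfolding C_def by (auto intro: Min_le)
  have Mge: "\<And>j. j < k \<Longrightarrow> fst (mc j) \<le> M" unfolding M_def
    by (rule member_le_sum) auto
  have nn: "\<forall>p\<in>K. 0 \<le> (\<Sum>j<k. f j p)" using assms(2) by (auto intro: sum_nonneg)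
  have main: "\<forall>p\<in>K. (\<Sum>j<k. f j p) \<ge> C * (face_monomial A S B p) ^ M"
    if part: "is_partition3 n A S B" and ex: "\<exists>q\<in>K \<inter> open_face n A S B. (\<Sum>j<k. f j q) > 0" for A S B
  proof
    fix p assume pK: "p \<in> K"
    obtain q where q: "q \<in> K \<inter> open_face n A S B" "(\<Sum>j<k. f j q) > 0" using ex by blast
    have "\<exists>j<k. f j q > 0"
    proof (rule ccontr)
      assume "\<not> (\<exists>j<k. f j q > 0)"
      then have "(\<Sum>j<k. f j q) \<le> 0" by (intro sum_nonpos) (metis lessThan_iff not_less)
      with q show False by simp
    qed
    then obtain j where j: "j < k" "f j q > 0" by blast
    have fj: "f j p \<ge> snd (mc j) * (face_monomial A S B p) ^ (fst (mc j))"
      using mc[OF j(1)] part q(1) j(2) pK by blast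
    have fb: "0 \<le> face_monomial A S B p \<and> face_monomial A S B p \<le> 1"
      using fm_bounds pK assms(1) part by blast
    have "C * (face_monomial A S B p) ^ M \<le> snd (mc j) * (face_monomial A S B p) ^ M"
      using Cle[OF j(1)] fb by (simp add: mult_right_mono)
    also have "\<dots> \<le> snd (mc j) * (face_monomial A S B p) ^ (fst (mc j))"
      using fb Mge[OF j(1)] mc[OF j(1)] by (auto intro!: mult_left_mono power_decreasing)
    also have "\<dots> \<le> f j p" by (rule fj)
    also have "\<dots> \<le> (\<Sum>j<k. f j p)"
      using j(1) assms(2) pK by (intro member_le_sum) auto
    finally show "(\<Sum>j<k. f j p) \<ge> C * (face_monomial A S B p) ^ M" .
  qed
  show ?thesis unfolding poly_bounded_on_def
    using nn Cpos main by blast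
qed

end
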